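(* A linear operator $T:\mathbb C[z]\to\mathbb C[z]$ preserves stability (i.e. $T(\mathcal H_1(\mathbb C))\subseteq\mathcal H_1(\mathbb C)\cup\{0\}$) if and only if either (a) $T$ has range of dimension at most one and $T(f)=\alpha(f)P$ for $f\in\mathbb C[z]$, where $\alpha:\mathbb C[z]\to\mathbb C$ is a linear functional and $P\in\mathcal H_1(\mathbb C)$; or (b) $T[(z+w)^n]\in\mathcal H_2(\mathbb C)\cup\{0\}$ for all $n\in\mathbb N$.
   Context: A polynomial $f\in\mathbb C[z_1,\dots,z_k]$ is stable if it is non-zero and $f(z_1,\dots,z_k)\neq0$ whenever $\Im z_j>0$ for all $j$; $\mathcal H_k(\mathbb C)$ is the set of stable polynomials in $k$ variables. $T$ is extended to polynomials in $z,w$ by $T(z^kw^\ell)=T(z^k)w^\ell$. *)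

theory Defs
  imports Complex_Main "HOL-Computational_Algebra.Polynomial"
begin

definition lin_op :: "(complex poly \<Rightarrow> complex poly) \<Rightarrow> bool" where
  "lin_op T \<longleftrightarrow> (\<forall>p q. T (p + q) = T p + T q) \<and> (\<forall>c p. T (smult c p) = smult c (T p))"

definition lin_fun :: "(complex poly \<Rightarrow> complex) \<Rightarrow> bool" where
  "lin_fun a \<longleftrightarrow> (\<forall>p q. a (p + q) = a p + a q) \<and> (\<forall>c p. a (smult c p) = c * a p)"

definition stable1 :: "complex poly \<Rightarrow> bool" where
  "stable1 f \<longleftrightarrow> f \<noteq> 0 \<and> (\<forall>z. Im z > 0 \<longrightarrow> poly f z \<noteq> 0)"

text \<open>Bivariate polynomials in z,w are represented as polynomials in w whose
  coefficients are polynomials in z: type complex poly poly.\<close>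
definition poly2 :: "complex poly poly \<Rightarrow> complex \<Rightarrow> complex \<Rightarrow> complex" where
  "poly2 q z w = poly (map_poly (\<lambda>c. poly c z) q) w"

definition stable2 :: "complex poly poly \<Rightarrow> bool" where
  "stable2 q \<longleftrightarrow> q \<noteq> 0 \<and> (\<forall>z w. Im z > 0 \<longrightarrow> Im w > 0 \<longrightarrow> poly2 q z w \<noteq> 0)"

text \<open>Extension of T to C[z,w] via T(z^k w^l) = T(z^k) w^l: apply T to each w-coefficient.\<close>
definition extend2 :: "(complex poly \<Rightarrow> complex poly) \<Rightarrow> complex poly poly \<Rightarrow> complex poly poly" where
  "extend2 T q = map_poly T q"

definition z_plus_w :: "complex poly poly" where
  "z_plus_w = [: [:0, 1:], [:1:] :]"

end

theory Submission
  imports Defs "HOL-Complex_Analysis.Great_Picard" "HOL-Computational_Algebra.Fundamental_Theorem_Algebra"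
begin


lemma cmod_sq: "(cmod z)^2 = (Re z)^2 + (Im z)^2"
  by (simp add: cmod_power2)

lemma key_ident:
  fixes P Q A :: complex
  shows "- Im ((A*Q+P) * cnj (A*P)) = (cmod P)^2 * Im A + (cmod A)^2 * (- Im (Q * cnj P))"
  unfolding cmod_sq by (simp add: algebra_simps power2_eq_square)

lemma cs_ineq:
  fixes P B :: complex and d :: real
  assumes "d > 0"
  shows "d * (cmod (P + B))^2 \<le> (d+1) * (d * (cmod P)^2 + (cmod B)^2)"
proof -
  have "0 \<le> (d * Re P - Re B)^2 + (d * Im P - Im B)^2" by simp
  then show ?thesis unfolding cmod_sq by (simp add: algebra_simps power2_eq_square)
qed

lemma key_step:
  fixes P Q A :: complex and d :: nat and h :: real
  assumes h: "h > 0" and hA: "Im A \<ge> h" and P: "P \<noteq> 0"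
    and I: "h * (cmod Q)^2 \<le> of_nat d * (- Im (Q * cnj P))"
    and I2: "d \<ge> 1 \<longrightarrow> - Im (Q * cnj P) > 0"
    and I3: "d = 0 \<longrightarrow> Q = 0"
  shows "h * (cmod (A*Q+P))^2 \<le> of_nat (Suc d) * (- Im ((A*Q+P) * cnj (A*P)))
         \<and> - Im ((A*Q+P) * cnj (A*P)) > 0"
proof -
  define X where "X = - Im (Q * cnj P)"
  have X0: "X \<ge> 0" using I2 I3 X_def by (cases "d = 0") auto
  have Pp: "(cmod P)^2 > 0" using P by simp
  have Y: "- Im ((A*Q+P) * cnj (A*P)) = (cmod P)^2 * Im A + (cmod A)^2 * X"
    unfolding X_def by (rule key_ident)
  have Ypos: "(cmod P)^2 * Im A + (cmod A)^2 * X > 0"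
    using Pp hA h X0 by (simp add: add_pos_nonneg mult_pos_pos)
  have ineq: "h * (cmod (A*Q+P))^2 \<le> of_nat (Suc d) * ((cmod P)^2 * Im A + (cmod A)^2 * X)"
  proof (cases "d = 0")
    case True
    then have "Q = 0" using I3 by simp
    then show ?thesis using True Pp hA
      by (simp add: X_def mult_left_mono)
  next
    case False
    then have dpos: "real d > 0" by simp
    have 1: "real d * (cmod (P + A*Q))^2 \<le> (real d+1) * (real d * (cmod P)^2 + (cmod (A*Q))^2)"
      by (rule cs_ineq[OF dpos])
    have 2: "h * (cmod (A*Q))^2 \<le> (cmod A)^2 * (real d * X)"
    proof -
      have "(cmod A)^2 * (h * (cmod Q)^2) \<le> (cmod A)^2 * (real d * X)"
        using I unfolding X_def by (intro mult_left_mono) auto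
      then show ?thesis by (simp add: norm_mult power_mult_distrib algebra_simps)
    qed
    have 3: "h * (real d * (cmod P)^2) \<le> real d * (cmod P)^2 * Im A"
      using hA dpos Pp by (simp add: mult.commute mult_left_mono)
    have "real d * (h * (cmod (A*Q+P))^2) = h * (real d * (cmod (P + A*Q))^2)"
      by (simp add: add.commute)
    also have "\<dots> \<le> h * ((real d+1) * (real d * (cmod P)^2 + (cmod (A*Q))^2))"
      using 1 h by (simp add: mult_left_mono)
    also have "\<dots> = (real d + 1) * (h * (real d * (cmod P)^2) + h * (cmod (A*Q))^2)"
      by (simp add: algebra_simps)
    also have "\<dots> \<le> (real d + 1) * (real d * (cmod P)^2 * Im A + (cmod A)^2 * (real d * X))"
      using 2 3 by (intro mult_left_mono add_mono) auto
    also have "\<dots> = real d * (of_nat (Suc d) * ((cmod P)^2 * Im A + (cmod A)^2 * X))"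
      by (simp add: algebra_simps)
    finally show ?thesis using dpos by simp
  qed
  show ?thesis using ineq Ypos Y by simp
qed


definition nvH :: "complex poly \<Rightarrow> bool" where
  "nvH p \<longleftrightarrow> (\<forall>u. Im u > 0 \<longrightarrow> poly p u \<noteq> 0)"

lemma INV:
  fixes p :: "complex poly"
  assumes "p \<noteq> 0" "nvH p" "Im w > 0"
  shows "Im w * (cmod (poly (pderiv p) w))^2 \<le> of_nat (degree p) * (- Im (poly (pderiv p) w * cnj (poly p w)))
       \<and> (degree p \<ge> 1 \<longrightarrow> - Im (poly (pderiv p) w * cnj (poly p w)) > 0)"
  using assms
proof (induction "degree p" arbitrary: p)
  case 0
  then have "pderiv p = 0" by (simp add: pderiv_eq_0_iff)
  then show ?case using 0 by simp
next
  case (Suc d)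
  then have "\<not> constant (poly p)" using constant_degree by (metis nat.distinct(1))
  then obtain r where r: "poly p r = 0" using fundamental_theorem_of_algebra by blast
  then obtain q where q: "p = [:-r,1:] * q" using poly_eq_0_iff_dvd by (metis dvdE)
  have q0: "q \<noteq> 0" using Suc.prems q by auto
  have "degree p = Suc (degree q)" unfolding q using q0 by (subst degree_mult_eq) auto
  then have dq: "degree q = d" using Suc.hyps by simp
  have rIm: "Im r \<le> 0" using Suc.prems(2) r unfolding nvH_def by (meson not_less)
  have nvq: "nvH q" using Suc.prems(2) q unfolding nvH_def by auto
  have IH: "Im w * (cmod (poly (pderiv q) w))^2 \<le> of_nat d * (- Im (poly (pderiv q) w * cnj (poly q w)))
       \<and> (d \<ge> 1 \<longrightarrow> - Im (poly (pderiv q) w * cnj (poly q w)) > 0)"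
    using Suc.hyps(1)[of q] dq q0 nvq Suc.prems(3) by simp
  have I3: "d = 0 \<longrightarrow> poly (pderiv q) w = 0"
  proof
    assume "d = 0"
    then have "pderiv q = 0" using dq pderiv_eq_0_iff by blast
    then show "poly (pderiv q) w = 0" by simp
  qed
  have P: "poly q w \<noteq> 0" using nvq Suc.prems(3) unfolding nvH_def by auto
  have hA: "Im (w - r) \<ge> Im w" using rIm by simp
  have dp: "pderiv p = [:-r,1:] * pderiv q + q"
  proof -
    have "pderiv [:-r,1:] = 1" by (simp add: pderiv_pCons)
    then show ?thesis unfolding q pderiv_mult by simp
  qed
  have ev1: "poly (pderiv p) w = (w - r) * poly (pderiv q) w + poly q w" by (simp add: dp algebra_simps)
  have ev2: "poly p w = (w - r) * poly q w" by (simp add: q algebra_simps)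
  have "Im w * (cmod ((w-r) * poly (pderiv q) w + poly q w))^2 \<le> of_nat (Suc d) * (- Im (((w-r) * poly (pderiv q) w + poly q w) * cnj ((w-r) * poly q w)))
         \<and> - Im (((w-r) * poly (pderiv q) w + poly q w) * cnj ((w-r) * poly q w)) > 0"
    by (rule key_step[OF Suc.prems(3) hA P]) (use IH I3 in auto)
  then show ?case unfolding ev1 ev2 using Suc.hyps(2) by simp
qed

lemma GL:
  fixes p :: "complex poly"
  assumes "nvH p"
  shows "pderiv p = 0 \<or> nvH (pderiv p)"
proof (cases "p = 0 \<or> degree p = 0")
  case True
  then show ?thesis by (auto simp: pderiv_eq_0_iff)
next
  case False
  have "nvH (pderiv p)" unfolding nvH_def
  proof (intro allI impI)
    fix w :: complex assume "Im w > 0"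
    then have "- Im (poly (pderiv p) w * cnj (poly p w)) > 0" using INV[OF _ assms] False by auto
    then show "poly (pderiv p) w \<noteq> 0" by auto
  qed
  then show ?thesis by simp
qed

lemma PD:
  fixes p :: "complex poly" and n :: nat
  assumes "p \<noteq> 0" "nvH p" "degree p \<le> n" "n \<ge> 1" "Im w > 0" "Im \<zeta> > 0"
  shows "of_nat n * poly p w - (w - \<zeta>) * poly (pderiv p) w \<noteq> 0"
proof
  assume E: "of_nat n * poly p w - (w - \<zeta>) * poly (pderiv p) w = 0"
  define P where "P = poly p w"
  define D where "D = w - \<zeta>"
  define Y where "Y = poly (pderiv p) w"
  have P0: "P \<noteq> 0" using assms(2,5) unfolding nvH_def P_def by auto
  have E': "D * Y = of_nat n * P" using E unfolding D_def Y_def P_def by simp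
  have D0: "D \<noteq> 0" using E' P0 assms(4) by auto
  have inv: "Im w * (cmod Y)^2 \<le> of_nat (degree p) * (- Im (Y * cnj P))"
    using INV[OF assms(1,2,5)] unfolding Y_def P_def by simp
  define h where "h = Im w"
  define d where "d = real (degree p)"
  have h0: "h > 0" using assms h_def by simp
  have dn: "d \<le> real n" using assms(3) d_def by simp
  have ImD: "Im D < h" using assms(6) unfolding D_def h_def by simp
  have m: "(cmod D)^2 * (h * (cmod Y)^2) \<le> (cmod D)^2 * (d * (- Im (Y * cnj P)))"
    using inv unfolding h_def d_def by (intro mult_left_mono) auto
  have l: "(cmod D)^2 * (cmod Y)^2 = (real n)^2 * (cmod P)^2"
  proof -
    have "cmod (D*Y) = real n * cmod P" using E' by (simp add: norm_mult)
    then have "(cmod (D*Y))^2 = (real n * cmod P)^2" by simp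
    then show ?thesis by (simp add: norm_mult power_mult_distrib)
  qed
  have r: "(cmod D)^2 * (- Im (Y * cnj P)) = real n * (cmod P)^2 * Im D"
  proof -
    have "(cmod D)^2 * (- Im (Y * cnj P)) = - Im ((D*Y) * cnj P * cnj D)"
      unfolding cmod_sq by (simp add: algebra_simps power2_eq_square)
    also have "\<dots> = - Im (of_nat n * P * cnj P * cnj D)" using E' by simp
    also have "\<dots> = real n * (cmod P)^2 * Im D"
      unfolding cmod_sq by (simp add: algebra_simps power2_eq_square)
    finally show ?thesis .
  qed
  have "h * ((real n)^2 * (cmod P)^2) \<le> d * (real n * (cmod P)^2 * Im D)"
    using m l r by (simp add: algebra_simps)
  then have "real n * (cmod P)^2 * (h * real n) \<le> real n * (cmod P)^2 * (d * Im D)"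
    by (simp add: algebra_simps power2_eq_square)
  moreover have "real n * (cmod P)^2 > 0" using P0 assms(4) by simp
  ultimately have k: "h * real n \<le> d * Im D" by (meson mult_le_cancel_left_pos)
  show False
  proof (cases "d = 0")
    case True
    have "h * real n > 0" using h0 assms(4) by simp
    then show ?thesis using k True by simp
  next
    case False
    then have "d > 0" using d_def by simp
    then have "d * Im D < d * h" using ImD by simp
    also have "d * h \<le> real n * h" using dn h0 by (simp add: mult_right_mono)
    finally show ?thesis using k by (simp add: mult.commute)
  qed
qed




lemma lin_op_add: "lin_op T \<Longrightarrow> T (p + q) = T p + T q" by (simp add: lin_op_def)
lemma lin_op_smult: "lin_op T \<Longrightarrow> T (smult c p) = smult c (T p)" by (simp add: lin_op_def)
lemma lin_op_0: "lin_op T \<Longrightarrow> T 0 = 0"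
  using lin_op_smult[of T 0 0] by simp
lemma lin_op_uminus: "lin_op T \<Longrightarrow> T (- p) = - T p"
  using lin_op_smult[of T "-1" p] by simp
lemma lin_op_diff: "lin_op T \<Longrightarrow> T (p - q) = T p - T q"
  using lin_op_add[of T p "-q"] lin_op_uminus[of T q] by simp
lemma lin_op_sum: "lin_op T \<Longrightarrow> T (\<Sum>i\<in>A. g i) = (\<Sum>i\<in>A. T (g i))"
  by (induction A rule: infinite_finite_induct) (auto simp: lin_op_0 lin_op_add)

lemma poly2_extend2:
  assumes "lin_op T"
  shows "poly2 (extend2 T q) z w = poly (T (poly q [:w:])) z"
proof (induction q)
  case 0
  then show ?case using assms by (simp add: poly2_def extend2_def lin_op_0)
next
  case (pCons a p)
  have T0: "T 0 = 0" using assms lin_op_0 by blast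
  have "[:w:] * poly p [:w:] = smult w (poly p [:w:])" by simp
  then show ?case using pCons assms
    by (simp add: poly2_def extend2_def map_poly_pCons T0 lin_op_add lin_op_smult)
qed

lemma zpw_eval: "poly (z_plus_w ^ n) [:w:] = [:w,1:] ^ n"
  by (simp add: z_plus_w_def)

lemma sym_eval: "lin_op T \<Longrightarrow> poly2 (extend2 T (z_plus_w ^ n)) z w = poly (T ([:w,1:] ^ n)) z"
  by (simp only: poly2_extend2 zpw_eval)

definition Fz :: "(complex poly \<Rightarrow> complex poly) \<Rightarrow> nat \<Rightarrow> complex \<Rightarrow> complex poly" where
  "Fz T n z = map_poly (\<lambda>c. poly c z) (extend2 T (z_plus_w ^ n))"

lemma Fz_eval: "lin_op T \<Longrightarrow> poly (Fz T n z) w = poly (T ([:w,1:] ^ n)) z"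
  using sym_eval[of T n z w] by (simp add: Fz_def poly2_def)

lemma ofnat_mult_poly: "(of_nat m :: complex poly) * c = smult (of_nat m) c"
  by (simp add: of_nat_poly)

lemma pderiv_map_lin:
  fixes L :: "complex poly \<Rightarrow> complex"
  assumes L0: "L 0 = 0" and Ls: "\<And>c a. L (smult c a) = c * L a"
  shows "pderiv (map_poly L q) = map_poly L (pderiv q)"
  by (intro poly_eqI) (simp add: coeff_pderiv coeff_map_poly L0 ofnat_mult_poly Ls del: of_nat_Suc)

lemma map_lin_smult:
  fixes L :: "complex poly \<Rightarrow> complex"
  assumes L0: "L 0 = 0" and Ls: "\<And>c a. L (smult c a) = c * L a"
  shows "map_poly L (smult (of_nat m) X) = smult (of_nat m) (map_poly L X)"
  by (intro poly_eqI) (simp add: coeff_map_poly L0 ofnat_mult_poly Ls del: of_nat_Suc)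

lemma pderiv_zpw: "pderiv (z_plus_w ^ Suc n) = smult (of_nat (Suc n)) (z_plus_w ^ n)"
proof -
  have "pderiv z_plus_w = 1" by (simp add: z_plus_w_def pderiv_pCons one_pCons)
  then show ?thesis by (simp add: pderiv_power_Suc del: power_Suc of_nat_Suc)
qed

lemma Fz_deriv:
  assumes "lin_op T"
  shows "pderiv (Fz T (Suc n) z) = smult (of_nat (Suc n)) (Fz T n z)"
proof -
  define L where "L = (\<lambda>c. poly (T c) z)"
  have T0: "T 0 = 0" using assms lin_op_0 by blast
  have L0: "L 0 = 0" by (simp add: L_def T0)
  have Ls: "\<And>c a. L (smult c a) = c * L a" by (simp add: L_def lin_op_smult assms)
  have e: "\<And>m. Fz T m z = map_poly L (z_plus_w ^ m)"
    by (simp add: Fz_def extend2_def map_poly_map_poly T0 L_def o_def)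
  show ?thesis unfolding e
    by (simp only: pderiv_map_lin[OF L0 Ls] pderiv_zpw map_lin_smult[OF L0 Ls])
qed



lemma poly_sum_N:
  fixes q :: "complex poly"
  assumes "degree q \<le> N"
  shows "poly q u = (\<Sum>k\<le>N. coeff q k * u^k)"
proof -
  have "poly q u = (\<Sum>k\<le>degree q. coeff q k * u^k)" by (simp add: poly_altdef)
  also have "\<dots> = (\<Sum>k\<le>N. coeff q k * u^k)"
    by (rule sum.mono_neutral_left) (use assms in \<open>auto simp: coeff_eq_0\<close>)
  finally show ?thesis .
qed

lemma pow_bound:
  fixes x d :: real
  assumes "d > 0" "x \<ge> d" "k \<le> N"
  shows "x^k \<le> x^N / d^(N-k)"
proof -
  have "x^N = x^k * x^(N-k)" using assms(3) by (simp add: power_add[symmetric])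
  moreover have "d^(N-k) \<le> x^(N-k)" using assms by (intro power_mono) auto
  moreover have "x^k \<ge> 0" using assms by simp
  ultimately have "x^k * d^(N-k) \<le> x^N" by (metis mult_left_mono)
  then show ?thesis using assms by (simp add: field_simps)
qed

lemma PL:
  fixes h :: "complex poly"
  assumes w0: "Im w0 > 0" and dh: "degree h \<le> N"
  shows "\<exists>\<epsilon>>0. stable1 ([:w0,1:]^N + smult (complex_of_real \<epsilon>) h)"
proof -
  define \<delta> where "\<delta> = Im w0"
  have d0: "\<delta> > 0" using w0 \<delta>_def by simp
  define q where "q = pcompose h [:-w0,1:]"
  have hq: "\<And>z. poly h z = poly q (z + w0)" by (simp add: q_def poly_pcompose)
  have dq: "degree q \<le> N" using dh by (simp add: q_def degree_pcompose)
  define C where "C = (\<Sum>k\<le>N. cmod (coeff q k) / \<delta>^(N-k))"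
  have C0: "C \<ge> 0" unfolding C_def using d0 by (intro sum_nonneg) auto
  have bound: "cmod (poly q u) \<le> C * (cmod u)^N" if "cmod u \<ge> \<delta>" for u
  proof -
    have "cmod (poly q u) = cmod (\<Sum>k\<le>N. coeff q k * u^k)" using poly_sum_N[OF dq] by simp
    also have "\<dots> \<le> (\<Sum>k\<le>N. cmod (coeff q k) * (cmod u)^k)"
      by (rule order_trans[OF norm_sum]) (simp add: norm_mult norm_power)
    also have "\<dots> \<le> (\<Sum>k\<le>N. cmod (coeff q k) * ((cmod u)^N / \<delta>^(N-k)))"
      by (intro sum_mono mult_left_mono pow_bound) (use that d0 in auto)
    also have "\<dots> = C * (cmod u)^N" unfolding C_def by (simp add: sum_distrib_right)
    finally show ?thesis .
  qed
  define \<epsilon> where "\<epsilon> = 1 / (C + 1)"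
  have e0: "\<epsilon> > 0" using C0 \<epsilon>_def by simp
  have nz: "poly ([:w0,1:]^N + smult (complex_of_real \<epsilon>) h) z \<noteq> 0" if z: "Im z > 0" for z
  proof
    assume E: "poly ([:w0,1:]^N + smult (complex_of_real \<epsilon>) h) z = 0"
    define u where "u = z + w0"
    have "Im u > \<delta>" using z unfolding u_def \<delta>_def by simp
    then have u: "cmod u > \<delta>" using abs_Im_le_cmod[of u] by linarith
    have "(w0 + z)^N = - (complex_of_real \<epsilon> * poly h z)" using E by (simp add: eq_neg_iff_add_eq_0)
    then have "cmod ((w0 + z)^N) = cmod (complex_of_real \<epsilon> * poly q (z + w0))"
      by (simp add: hq)
    then have "cmod u ^ N = \<epsilon> * cmod (poly q u)"
      using e0 by (simp add: u_def norm_mult norm_power add.commute)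
    also have "\<dots> \<le> \<epsilon> * (C * (cmod u)^N)" using bound[of u] u e0 by (intro mult_left_mono) auto
    also have "\<dots> < cmod u ^ N"
    proof -
      have "cmod u ^ N > 0" using u d0 by (intro zero_less_power) linarith
      moreover have "\<epsilon> * C < 1" using C0 unfolding \<epsilon>_def by (simp add: field_simps)
      ultimately have "(\<epsilon> * C) * cmod u ^ N < 1 * cmod u ^ N" by (intro mult_strict_right_mono)
      then show ?thesis by (simp add: mult.assoc)
    qed
    finally show False by simp
  qed
  have "[:w0,1:]^N + smult (complex_of_real \<epsilon>) h \<noteq> 0"
    using nz[of \<i>] by (metis complex_i_not_zero imaginary_unit.sel(2) poly_0 zero_less_one)
  then show ?thesis using nz e0 unfolding stable1_def by blast
qed

lemma exists_H_nonroot: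
  fixes p :: "complex poly"
  assumes "p \<noteq> 0"
  shows "\<exists>z. Im z > 0 \<and> poly p z \<noteq> 0"
proof (rule ccontr)
  assume "\<not> ?thesis"
  then have "range (\<lambda>k::nat. \<i> * of_nat (Suc k)) \<subseteq> {x. poly p x = 0}" by auto
  moreover have "infinite (range (\<lambda>k::nat. \<i> * of_nat (Suc k)))"
    by (rule range_inj_infinite) (auto simp: inj_def)
  ultimately show False using poly_roots_finite[OF assms] finite_subset by blast
qed

lemma poly2_zero:
  fixes q :: "complex poly poly"
  assumes "\<And>z w. Im z > 0 \<Longrightarrow> poly2 q z w = 0"
  shows "q = 0"
proof (rule poly_eqI)
  fix k
  show "coeff q k = coeff 0 k"
  proof (rule ccontr)
    assume "coeff q k \<noteq> coeff 0 k"
    then have ne: "coeff q k \<noteq> 0" by simp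
    obtain z where z: "Im z > 0" "poly (coeff q k) z \<noteq> 0" using exists_H_nonroot[OF ne] by blast
    have "map_poly (\<lambda>c. poly c z) q = 0"
      using assms[OF z(1)] unfolding poly2_def using poly_all_0_iff_0 by blast
    then have "coeff (map_poly (\<lambda>c. poly c z) q) k = 0" by simp
    then show False using z by (simp add: coeff_map_poly)
  qed
qed

lemma stable_lin: "Im w0 > 0 \<Longrightarrow> stable1 ([:w0,1:]^N)"
  unfolding stable1_def
proof (intro conjI allI impI)
  assume "Im w0 > 0"
  show "[:w0, 1:] ^ N \<noteq> 0" by simp
  fix z :: complex assume "Im z > 0" "Im w0 > 0"
  then have "w0 + z \<noteq> 0" by (metis add_pos_pos zero_complex.simps(2) plus_complex.simps(2) less_irrefl)
  then show "poly ([:w0, 1:] ^ N) z \<noteq> 0" by simp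
qed

lemma stable_smult: "c \<noteq> 0 \<Longrightarrow> stable1 (smult c p) \<longleftrightarrow> stable1 p"
  unfolding stable1_def by auto



lemma rank1:
  assumes lin: "lin_op T" and pres: "\<forall>f. stable1 f \<longrightarrow> stable1 (T f) \<or> T f = 0"
    and dep: "\<forall>f1 f2. T f2 \<noteq> 0 \<longrightarrow> (\<exists>c. T f1 = smult c (T f2))"
  shows "\<exists>\<alpha> P. lin_fun \<alpha> \<and> stable1 P \<and> (\<forall>f. T f = smult (\<alpha> f) P)"
proof (cases "\<forall>g. stable1 g \<longrightarrow> T g = 0")
  case True
  have "T h = 0" for h
  proof -
    have i: "Im \<i> > 0" by simp
    obtain \<epsilon> where e: "\<epsilon> > 0" "stable1 ([:\<i>,1:]^(degree h) + smult (complex_of_real \<epsilon>) h)"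
      using PL[OF i, of h "degree h"] by auto
    have "T ([:\<i>,1:]^(degree h) + smult (complex_of_real \<epsilon>) h) = 0" using True e by blast
    moreover have "T ([:\<i>,1:]^(degree h)) = 0" using True stable_lin[OF i] by blast
    ultimately have "smult (complex_of_real \<epsilon>) (T h) = 0" using lin by (simp add: lin_op_add lin_op_smult)
    then show ?thesis using e by simp
  qed
  moreover have "lin_fun (\<lambda>_. 0)" by (simp add: lin_fun_def)
  moreover have "stable1 1" by (simp add: stable1_def)
  ultimately show ?thesis by auto
next
  case False
  then obtain g where g: "stable1 g" "T g \<noteq> 0" by blast
  define P where "P = T g"
  have P: "stable1 P" "P \<noteq> 0" using g pres P_def by auto
  define \<alpha> where "\<alpha> = (\<lambda>f. SOME c. T f = smult c P)"
  have a: "T f = smult (\<alpha> f) P" for f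
    unfolding \<alpha>_def by (rule someI_ex) (use dep P P_def in blast)
  have cancel: "smult a P = smult b P \<Longrightarrow> a = b" for a b
  proof -
    assume "smult a P = smult b P"
    then have "smult (a - b) P = 0" by (simp add: smult_diff_left)
    then show "a = b" using P by simp
  qed
  have "lin_fun \<alpha>" unfolding lin_fun_def
  proof (intro conjI allI)
    fix p q
    have "smult (\<alpha> (p+q)) P = smult (\<alpha> p + \<alpha> q) P"
      using a[of "p+q"] a[of p] a[of q] lin by (simp add: lin_op_add smult_add_left)
    then show "\<alpha> (p + q) = \<alpha> p + \<alpha> q" by (rule cancel)
  next
    fix c p
    have "smult (\<alpha> (smult c p)) P = smult (c * \<alpha> p) P"
      using a[of "smult c p"] a[of p] lin by (simp add: lin_op_smult)
    then show "\<alpha> (smult c p) = c * \<alpha> p" by (rule cancel)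
  qed
  then show ?thesis using a P by blast
qed

lemma Fz_nvH_down:
  assumes lin: "lin_op T" and top: "nvH (Fz T N z0)" and k: "k \<le> N"
  shows "Fz T k z0 = 0 \<or> nvH (Fz T k z0)"
proof -
  have "\<forall>j. j \<le> N \<longrightarrow> Fz T (N - j) z0 = 0 \<or> nvH (Fz T (N - j) z0)"
  proof (intro allI)
    fix j show "j \<le> N \<longrightarrow> Fz T (N - j) z0 = 0 \<or> nvH (Fz T (N - j) z0)"
    proof (induction j)
      case 0 then show ?case using top by simp
    next
      case (Suc j)
      show ?case
      proof
        assume jN: "Suc j \<le> N"
        define m where "m = N - Suc j"
        have Sm: "Suc m = N - j" using jN m_def by simp
        have h: "Fz T (Suc m) z0 = 0 \<or> nvH (Fz T (Suc m) z0)" using Suc jN Sm by simp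
        have d: "pderiv (Fz T (Suc m) z0) = smult (of_nat (Suc m)) (Fz T m z0)" by (rule Fz_deriv[OF lin])
        have "pderiv (Fz T (Suc m) z0) = 0 \<or> nvH (pderiv (Fz T (Suc m) z0))"
          using h GL by auto
        then have "Fz T m z0 = 0 \<or> nvH (Fz T m z0)"
          unfolding d by (auto simp: nvH_def simp del: of_nat_Suc)
        then show "Fz T (N - Suc j) z0 = 0 \<or> nvH (Fz T (N - Suc j) z0)" using m_def by simp
      qed
    qed
  qed
  then show ?thesis using k by (metis diff_diff_cancel diff_le_self)
qed

lemma necessity:
  assumes lin: "lin_op T" and pres: "\<forall>f. stable1 f \<longrightarrow> stable1 (T f) \<or> T f = 0"
    and na: "\<not> (\<exists>\<alpha> P. lin_fun \<alpha> \<and> stable1 P \<and> (\<forall>f. T f = smult (\<alpha> f) P))"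
  shows "stable2 (extend2 T (z_plus_w ^ n)) \<or> extend2 T (z_plus_w ^ n) = 0"
proof -
  obtain f1 f2 where f: "T f2 \<noteq> 0" "\<And>c. T f1 \<noteq> smult c (T f2)"
    using rank1[OF lin pres] na by blast
  define N where "N = max n (max (degree f1) (degree f2))"
  have step1: "T ([:w0,1:]^N) \<noteq> 0" if w0: "Im w0 > 0" for w0
  proof
    assume T0: "T ([:w0,1:]^N) = 0"
    have sh: "stable1 (T h) \<or> T h = 0" if dh: "degree h \<le> N" for h
    proof -
      obtain \<epsilon> where e: "\<epsilon> > 0" "stable1 ([:w0,1:]^N + smult (complex_of_real \<epsilon>) h)"
        using PL[OF w0 dh] by auto
      have "T ([:w0,1:]^N + smult (complex_of_real \<epsilon>) h) = smult (complex_of_real \<epsilon>) (T h)"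
        using lin T0 by (simp add: lin_op_add lin_op_smult)
      then have "stable1 (smult (complex_of_real \<epsilon>) (T h)) \<or> smult (complex_of_real \<epsilon>) (T h) = 0"
        using pres e by metis
      then show ?thesis using e stable_smult[of "complex_of_real \<epsilon>"] by auto
    qed
    obtain z1 where z1: "Im z1 > 0" "poly (T f2) z1 \<noteq> 0" using exists_H_nonroot[OF f(1)] by blast
    define c where "c = - poly (T f1) z1 / poly (T f2) z1"
    define h where "h = f1 + smult c f2"
    have d1: "degree f1 \<le> N" "degree (smult c f2) \<le> N"
      using degree_smult_le[of c f2] by (auto simp: N_def)
    have "degree h \<le> N" unfolding h_def by (rule degree_add_le[OF d1])
    then have sh': "stable1 (T h) \<or> T h = 0" by (rule sh)
    have Th: "T h = T f1 + smult c (T f2)" using lin by (simp add: h_def lin_op_add lin_op_smult)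
    have "poly (T h) z1 = 0" using z1 by (simp add: Th c_def)
    then have "T h = 0" using sh' z1 unfolding stable1_def by blast
    then have "T f1 = smult (- c) (T f2)" using Th by (simp add: eq_neg_iff_add_eq_0)
    then show False using f(2) by blast
  qed
  have nvN: "nvH (Fz T N z0)" if "Im z0 > 0" for z0
    unfolding nvH_def
  proof (intro allI impI)
    fix w assume w: "Im w > 0"
    have "stable1 (T ([:w,1:]^N))" using pres stable_lin[OF w] step1[OF w] by blast
    then show "poly (Fz T N z0) w \<noteq> 0" using that by (simp add: Fz_eval[OF lin] stable1_def)
  qed
  have nN: "n \<le> N" by (simp add: N_def)
  have ev: "poly2 (extend2 T (z_plus_w ^ n)) z w = poly (Fz T n z) w" for z w
    by (simp add: Fz_def poly2_def)
  show ?thesis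
  proof (cases "\<exists>z0 w0. Im z0 > 0 \<and> Im w0 > 0 \<and> poly (T ([:w0,1:]^n)) z0 = 0")
    case True
    then obtain z0 w0 where zw: "Im z0 > 0" "Im w0 > 0" "poly (T ([:w0,1:]^n)) z0 = 0" by blast
    have "T ([:w0,1:]^n) = 0" using pres stable_lin[OF zw(2), of n] zw unfolding stable1_def by blast
    then have "Fz T n z1 = 0" if z1: "Im z1 > 0" for z1
    proof -
      have "poly (Fz T n z1) w0 = 0" using Fz_eval[OF lin] \<open>T ([:w0,1:]^n) = 0\<close> by simp
      then have "\<not> nvH (Fz T n z1)" using zw unfolding nvH_def by blast
      then show ?thesis using Fz_nvH_down[OF lin nvN[OF z1] nN] by blast
    qed
    then have "extend2 T (z_plus_w ^ n) = 0" by (intro poly2_zero) (simp add: ev)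
    then show ?thesis by simp
  next
    case False
    then show ?thesis unfolding stable2_def using sym_eval[OF lin] by auto
  qed
qed



definition symb_ok :: "(complex poly \<Rightarrow> complex poly) \<Rightarrow> nat \<Rightarrow> bool" where
  "symb_ok T n \<longleftrightarrow> (\<forall>z w. Im z > 0 \<longrightarrow> Im w > 0 \<longrightarrow> poly (T ([:w,1:]^n)) z \<noteq> 0)
                    \<or> (\<forall>w. T ([:w,1:]^n) = 0)"

lemma degree_Fz: "degree (Fz T n z) \<le> n"
proof -
  have "degree (Fz T n z) \<le> degree (extend2 T (z_plus_w ^ n))"
    unfolding Fz_def by (rule map_poly_degree_leq)
  also have "\<dots> \<le> degree (z_plus_w ^ n)" unfolding extend2_def by (rule map_poly_degree_leq)
  also have "\<dots> \<le> degree z_plus_w * n" by (rule degree_power_le)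
  also have "\<dots> = n" by (simp add: z_plus_w_def)
  finally show ?thesis .
qed

lemma lin_op_S: "lin_op T \<Longrightarrow> lin_op (\<lambda>p. T (r * p))"
  unfolding lin_op_def by (simp add: distrib_left)

lemma lin_factor: "[:-(a::complex),1:] * [:w,1:]^n = [:w,1:]^(Suc n) - smult (w + a) ([:w,1:]^n)"
  by (rule poly_ext) (simp add: algebra_simps)

lemma Q_strict:
  assumes "lin_op T" "symb_ok T n" "f \<noteq> 0" "degree f = n" "\<forall>u. poly f u = 0 \<longrightarrow> Im u < 0"
  shows "stable1 (T f) \<or> T f = 0"
  using assms
proof (induction n arbitrary: T f)
  case 0
  obtain c where c: "f = [:c:]" using 0 by (metis degree_eq_zeroE)
  then have c0: "c \<noteq> 0" using 0 by simp
  have Tf: "T f = smult c (T 1)" using c 0(1) lin_op_smult[OF 0(1), of c 1] by simp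
  from 0(2) show ?case unfolding symb_ok_def
  proof
    assume h: "\<forall>z w. Im z > 0 \<longrightarrow> Im w > 0 \<longrightarrow> poly (T ([:w,1:]^0)) z \<noteq> 0"
    then have "stable1 (T 1)" unfolding stable1_def
      by (metis imaginary_unit.sel(2) poly_0 power_0 zero_less_one)
    then show ?thesis using Tf c0 stable_smult by simp
  next
    assume "\<forall>w. T ([:w,1:]^0) = 0"
    then show ?thesis using Tf by simp
  qed
next
  case (Suc n)
  note lin = Suc.prems(1)
  have "\<not> constant (poly f)" using constant_degree Suc.prems(4) by (metis nat.distinct(1))
  then obtain a where a: "poly f a = 0" using fundamental_theorem_of_algebra by blast
  then obtain g where g: "f = [:-a,1:] * g" using poly_eq_0_iff_dvd by (metis dvdE)
  have g0: "g \<noteq> 0" using Suc.prems g by auto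
  have "degree f = Suc (degree g)" unfolding g using g0 by (subst degree_mult_eq) auto
  then have dg: "degree g = n" using Suc.prems by simp
  have aIm: "Im a < 0" using Suc.prems(5) a by blast
  have rg: "\<forall>u. poly g u = 0 \<longrightarrow> Im u < 0" using Suc.prems(5) g by auto
  define S where "S = (\<lambda>p. T ([:-a,1:] * p))"
  have linS: "lin_op S" unfolding S_def by (rule lin_op_S[OF lin])
  have Sw: "poly (S ([:w,1:]^n)) z = poly (Fz T (Suc n) z) w - (w + a) * poly (Fz T n z) w" for z w
    unfolding S_def lin_factor using lin by (simp add: lin_op_diff lin_op_smult Fz_eval)
  have Fn: "poly (Fz T n z) w = poly (pderiv (Fz T (Suc n) z)) w / of_nat (Suc n)" for z w
    by (simp add: Fz_deriv[OF lin] del: of_nat_Suc)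
  have "symb_ok S n"
    using Suc.prems(2) unfolding symb_ok_def
  proof
    assume h: "\<forall>z w. Im z > 0 \<longrightarrow> Im w > 0 \<longrightarrow> poly (T ([:w,1:]^Suc n)) z \<noteq> 0"
    have "poly (S ([:w,1:]^n)) z \<noteq> 0" if z: "Im z > 0" and w: "Im w > 0" for z w
    proof -
      define p where "p = Fz T (Suc n) z"
      have nv: "nvH p" unfolding nvH_def p_def using h z by (simp add: Fz_eval[OF lin])
      have p0: "p \<noteq> 0" using nv unfolding nvH_def
        by (metis imaginary_unit.sel(2) poly_0 zero_less_one)
      have dp: "degree p \<le> Suc n" unfolding p_def by (rule degree_Fz)
      have ne: "of_nat (Suc n) * poly p w - (w - (-a)) * poly (pderiv p) w \<noteq> 0"
        by (rule PD[OF p0 nv dp _ w]) (use aIm in auto)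
      have "poly (S ([:w,1:]^n)) z = (of_nat (Suc n) * poly p w - (w - (-a)) * poly (pderiv p) w) / of_nat (Suc n)"
        unfolding Sw Fn p_def by (simp add: field_simps del: of_nat_Suc)
      moreover have "(of_nat (Suc n) :: complex) \<noteq> 0" by (rule of_nat_neq_0)
      ultimately show ?thesis using ne by (simp del: of_nat_Suc)
    qed
    then show "(\<forall>z w. Im z > 0 \<longrightarrow> Im w > 0 \<longrightarrow> poly (S ([:w,1:]^n)) z \<noteq> 0) \<or> (\<forall>w. S ([:w,1:]^n) = 0)"
      by blast
  next
    assume h: "\<forall>w. T ([:w,1:]^Suc n) = 0"
    have "Fz T (Suc n) z = 0" for z
      using h by (simp add: poly_all_0_iff_0[symmetric] Fz_eval[OF lin])
    then have "poly (S ([:w,1:]^n)) z = 0" for z w unfolding Sw Fn by simp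
    then have "\<forall>w. S ([:w,1:]^n) = 0" using poly_all_0_iff_0 by blast
    then show "(\<forall>z w. Im z > 0 \<longrightarrow> Im w > 0 \<longrightarrow> poly (S ([:w,1:]^n)) z \<noteq> 0) \<or> (\<forall>w. S ([:w,1:]^n) = 0)"
      by blast
  qed
  from Suc.IH[OF linS this g0 dg rg] show ?case unfolding S_def g .
qed



lemma coeff_pcomp_cont: "continuous_on UNIV (\<lambda>s::complex. coeff (pcompose p [:s,1:]) i)"
proof (induction p arbitrary: i)
  case 0
  then show ?case by simp
next
  case (pCons a p)
  have e: "coeff (pcompose (pCons a p) [:s,1:]) i =
        coeff [:a:] i + s * coeff (pcompose p [:s,1:]) i + (case i of 0 \<Rightarrow> 0 | Suc j \<Rightarrow> coeff (pcompose p [:s,1:]) j)"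
    for s
    by (simp add: pcompose_pCons coeff_pCons split: nat.split)
  show ?case unfolding e
    by (cases i) (auto intro!: continuous_intros pCons.IH)
qed

lemma T_rep:
  assumes lin: "lin_op T" and d: "degree q \<le> n"
  shows "poly (T q) z = (\<Sum>i\<le>n. coeff q i * poly (T (monom 1 i)) z)"
proof -
  have "T q = T (\<Sum>i\<le>n. monom (coeff q i) i)" using poly_as_sum_of_monoms'[OF d] by simp
  also have "\<dots> = (\<Sum>i\<le>n. smult (coeff q i) (T (monom 1 i)))"
    by (simp add: lin_op_sum[OF lin] lin_op_smult[OF lin, symmetric] smult_monom)
  finally show ?thesis by (simp add: poly_sum)
qed

lemma ul_sum:
  fixes h :: "'i \<Rightarrow> 'n \<Rightarrow> complex \<Rightarrow> complex"
  assumes "finite I" "\<And>i. i \<in> I \<Longrightarrow> uniform_limit K (h i) (G i) F"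
  shows "uniform_limit K (\<lambda>k z. \<Sum>i\<in>I. h i k z) (\<lambda>z. \<Sum>i\<in>I. G i z) F"
  using assms
proof (induction I rule: finite_induct)
  case empty
  then show ?case by (simp add: uniform_limit_const)
next
  case (insert x I)
  then show ?case by (simp, intro uniform_limit_add) auto
qed

lemma ul_term:
  fixes c :: "nat \<Rightarrow> complex" and \<phi> :: "complex \<Rightarrow> complex"
  assumes c: "c \<longlonglongrightarrow> c0" and ph: "continuous_on K \<phi>" and K: "compact K"
  shows "uniform_limit K (\<lambda>k z. c k * \<phi> z) (\<lambda>z. c0 * \<phi> z) sequentially"
proof -
  have u1: "uniform_limit K (\<lambda>k z. c k) (\<lambda>z. c0) sequentially"
  proof (rule uniform_limitI)
    fix e :: real assume "e > 0"
    then have "\<forall>\<^sub>F k in sequentially. dist (c k) c0 < e" using c tendsto_iff by blast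
    then show "\<forall>\<^sub>F k in sequentially. \<forall>z\<in>K. dist (c k) c0 < e" by simp
  qed
  have u2: "uniform_limit K (\<lambda>k. \<phi>) \<phi> sequentially" by (rule uniform_limit_const)
  have b1: "bounded (\<phi> ` K)" by (rule compact_imp_bounded[OF compact_continuous_image[OF ph K]])
  have b2: "bounded ((\<lambda>z. c0) ` K)"
    by (rule bounded_subset[of "{c0}"]) auto
  show ?thesis
    using bounded_bilinear.bounded_uniform_limit[OF bounded_bilinear_mult u1 u2 b1 b2] by simp
qed

lemma suff:
  assumes lin: "lin_op T" and ok: "symb_ok T (degree f)" and st: "stable1 f"
  shows "stable1 (T f) \<or> T f = 0"
proof (rule ccontr)
  assume neg: "\<not> (stable1 (T f) \<or> T f = 0)"
  then have Tf0: "T f \<noteq> 0" by simp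
  then obtain z0 where z0: "Im z0 > 0" "poly (T f) z0 = 0" using neg unfolding stable1_def by blast
  define n where "n = degree f"
  define fs where "fs = (\<lambda>s. pcompose f [:s,1:])"
  have f0: "f \<noteq> 0" using st stable1_def by simp
  have fs_eval: "poly (fs s) u = poly f (s + u)" for s u by (simp add: fs_def poly_pcompose)
  have dfs: "degree (fs s) = n" for s by (simp add: fs_def degree_pcompose n_def)
  have fsQ: "stable1 (T (fs s)) \<or> T (fs s) = 0" if s: "Im s > 0" for s
  proof (rule Q_strict[OF lin])
    show "symb_ok T n" using ok n_def by simp
    show "degree (fs s) = n" by (rule dfs)
    show "fs s \<noteq> 0"
    proof
      assume "fs s = 0"
      then have "poly f u = 0" for u using fs_eval[of s "u - s"] by simp
      then show False using f0 poly_all_0_iff_0 by blast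
    qed
    show "\<forall>u. poly (fs s) u = 0 \<longrightarrow> Im u < 0"
    proof (intro allI impI)
      fix u assume "poly (fs s) u = 0"
      then have "poly f (s + u) = 0" by (simp add: fs_eval)
      then have "\<not> Im (s + u) > 0" using st unfolding stable1_def by blast
      then show "Im u < 0" using s by simp
    qed
  qed
  define \<phi> where "\<phi> = (\<lambda>i z. poly (T (monom 1 i)) z)"
  have rep: "poly (T (fs s)) z = (\<Sum>i\<le>n. coeff (fs s) i * \<phi> i z)" for s z
    unfolding \<phi>_def by (rule T_rep[OF lin]) (simp add: dfs)
  have fs0: "fs 0 = f" by (simp add: fs_def)
  have rep0: "poly (T f) z = (\<Sum>i\<le>n. coeff f i * \<phi> i z)" for z
    using rep[of 0 z] fs0 by simp
  have ccont: "continuous_on UNIV (\<lambda>s. coeff (fs s) i)" for i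
    unfolding fs_def by (rule coeff_pcomp_cont)
  have phcont: "continuous_on UNIV (\<phi> i)" for i
    unfolding \<phi>_def by (intro continuous_intros)
  obtain z1 where z1: "Im z1 > 0" "poly (T f) z1 \<noteq> 0" using exists_H_nonroot[OF Tf0] by blast
  define t where "t = (\<lambda>k::nat. \<i> * complex_of_real (inverse (real (Suc k))))"
  have t0: "t \<longlonglongrightarrow> 0"
  proof -
    have "(\<lambda>k. complex_of_real (inverse (real (Suc k)))) \<longlonglongrightarrow> complex_of_real 0"
      by (rule tendsto_of_real[OF LIMSEQ_inverse_real_of_nat])
    then have "(\<lambda>k. \<i> * complex_of_real (inverse (real (Suc k)))) \<longlonglongrightarrow> \<i> * 0"
      by (intro tendsto_mult tendsto_const) simp
    then show ?thesis by (simp add: t_def)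
  qed
  have tIm: "Im (t k) > 0" for k by (simp add: t_def)
  have ctend: "(\<lambda>k. coeff (fs (t k)) i) \<longlonglongrightarrow> coeff f i" for i
  proof -
    have "isCont (\<lambda>s. coeff (fs s) i) 0" using ccont[of i] by (simp add: continuous_on_eq_continuous_at)
    then have "(\<lambda>k. coeff (fs (t k)) i) \<longlonglongrightarrow> coeff (fs 0) i"
      using t0 isCont_tendsto_compose by blast
    then show ?thesis by (simp add: fs0)
  qed
  have psi: "(\<lambda>k. poly (T (fs (t k))) z1) \<longlonglongrightarrow> poly (T f) z1"
    unfolding rep rep0 by (intro tendsto_intros ctend)
  have "eventually (\<lambda>k. poly (T (fs (t k))) z1 \<noteq> 0) sequentially"
    by (rule tendsto_imp_eventually_ne[OF psi z1(2)])
  then obtain K0 where K0: "\<And>k. k \<ge> K0 \<Longrightarrow> poly (T (fs (t k))) z1 \<noteq> 0"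
    unfolding eventually_sequentially by blast
  define S where "S = {z::complex. Im z > 0}"
  define \<F> where "\<F> = (\<lambda>k z. poly (T (fs (t (k + K0)))) z)"
  have "poly (T f) z0 \<noteq> 0"
  proof (rule Hurwitz_no_zeros[of S \<F> "poly (T f)"])
    show "open S" unfolding S_def by (rule open_halfspace_Im_gt)
    show "connected S" unfolding S_def by (rule convex_connected[OF convex_halfspace_Im_gt])
    show "\<F> k holomorphic_on S" for k unfolding \<F>_def by (intro holomorphic_intros)
    show "poly (T f) holomorphic_on S" by (intro holomorphic_intros)
    show "uniform_limit K \<F> (poly (T f)) sequentially" if K: "compact K" "K \<subseteq> S" for K
    proof -
      have e1: "\<F> = (\<lambda>k z. \<Sum>i\<le>n. coeff (fs (t (k + K0))) i * \<phi> i z)"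
        unfolding \<F>_def by (intro ext) (simp add: rep)
      have e2: "poly (T f) = (\<lambda>z. \<Sum>i\<le>n. coeff f i * \<phi> i z)" by (intro ext) (simp add: rep0)
      have "uniform_limit K (\<lambda>k z. \<Sum>i\<le>n. coeff (fs (t (k + K0))) i * \<phi> i z) (\<lambda>z. \<Sum>i\<le>n. coeff f i * \<phi> i z) sequentially"
      proof (rule ul_sum)
        fix i
        have "(\<lambda>k. coeff (fs (t (k + K0))) i) \<longlonglongrightarrow> coeff f i"
          using ctend[of i] by (rule LIMSEQ_ignore_initial_segment)
        then show "uniform_limit K (\<lambda>k z. coeff (fs (t (k + K0))) i * \<phi> i z) (\<lambda>z. coeff f i * \<phi> i z) sequentially"
          by (rule ul_term[OF _ continuous_on_subset[OF phcont[of i]] K(1)]) simp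
      qed simp
      then show ?thesis unfolding e1 e2 .
    qed
    show "\<not> poly (T f) constant_on S"
    proof
      assume "poly (T f) constant_on S"
      then obtain c where c: "\<And>z. z \<in> S \<Longrightarrow> poly (T f) z = c" unfolding constant_on_def by blast
      have "c = 0" using c[of z0] z0 S_def by simp
      then show False using c z1 S_def by auto
    qed
    show "\<F> k z \<noteq> 0" if "z \<in> S" for k z
    proof -
      have "T (fs (t (k + K0))) \<noteq> 0" using K0[of "k + K0"] by auto
      then have "stable1 (T (fs (t (k + K0))))" using fsQ[OF tIm] by blast
      then show ?thesis using that unfolding \<F>_def S_def stable1_def by blast
    qed
    show "z0 \<in> S" using z0 S_def by simp
  qed
  then show False using z0 by simp
qed


theorem mainTheorem5:
  fixes T :: "complex poly \<Rightarrow> complex poly"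
  assumes "lin_op T"
  shows "(\<forall>f. stable1 f \<longrightarrow> stable1 (T f) \<or> T f = 0) \<longleftrightarrow>
         ((\<exists>\<alpha> P. lin_fun \<alpha> \<and> stable1 P \<and> (\<forall>f. T f = smult (\<alpha> f) P))
          \<or> (\<forall>n::nat. stable2 (extend2 T (z_plus_w ^ n)) \<or> extend2 T (z_plus_w ^ n) = 0))"
proof
  assume pres: "\<forall>f. stable1 f \<longrightarrow> stable1 (T f) \<or> T f = 0"
  show "(\<exists>\<alpha> P. lin_fun \<alpha> \<and> stable1 P \<and> (\<forall>f. T f = smult (\<alpha> f) P))
          \<or> (\<forall>n::nat. stable2 (extend2 T (z_plus_w ^ n)) \<or> extend2 T (z_plus_w ^ n) = 0)"
    using necessity[OF assms pres] by blast
next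
  assume H: "(\<exists>\<alpha> P. lin_fun \<alpha> \<and> stable1 P \<and> (\<forall>f. T f = smult (\<alpha> f) P))
          \<or> (\<forall>n::nat. stable2 (extend2 T (z_plus_w ^ n)) \<or> extend2 T (z_plus_w ^ n) = 0)"
  show "\<forall>f. stable1 f \<longrightarrow> stable1 (T f) \<or> T f = 0"
  proof (intro allI impI)
    fix f assume st: "stable1 f"
    from H show "stable1 (T f) \<or> T f = 0"
    proof
      assume "\<exists>\<alpha> P. lin_fun \<alpha> \<and> stable1 P \<and> (\<forall>f. T f = smult (\<alpha> f) P)"
      then obtain \<alpha> P where aP: "stable1 P" "\<And>f. T f = smult (\<alpha> f) P" by blast
      show ?thesis
      proof (cases "\<alpha> f = 0")
        case True then show ?thesis using aP by simp
      next
        case False then show ?thesis using aP stable_smult by simp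
      qed
    next
      assume b: "\<forall>n::nat. stable2 (extend2 T (z_plus_w ^ n)) \<or> extend2 T (z_plus_w ^ n) = 0"
      define n where "n = degree f"
      have "symb_ok T n"
        using b[rule_format, of n] unfolding symb_ok_def
      proof
        assume "stable2 (extend2 T (z_plus_w ^ n))"
        then have "\<forall>z w. Im z > 0 \<longrightarrow> Im w > 0 \<longrightarrow> poly (T ([:w,1:]^n)) z \<noteq> 0"
          unfolding stable2_def using sym_eval[OF assms] by auto
        then show "(\<forall>z w. Im z > 0 \<longrightarrow> Im w > 0 \<longrightarrow> poly (T ([:w,1:]^n)) z \<noteq> 0) \<or> (\<forall>w. T ([:w,1:]^n) = 0)"
          by blast
      next
        assume z: "extend2 T (z_plus_w ^ n) = 0"
        have "T ([:w,1:]^n) = 0" for w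
        proof -
          have "poly (T ([:w,1:]^n)) z = 0" for z
            using sym_eval[OF assms, of n z w] z by (simp add: poly2_def)
          then show ?thesis using poly_all_0_iff_0 by blast
        qed
        then show "(\<forall>z w. Im z > 0 \<longrightarrow> Im w > 0 \<longrightarrow> poly (T ([:w,1:]^n)) z \<noteq> 0) \<or> (\<forall>w. T ([:w,1:]^n) = 0)"
          by blast
      qed
      then show ?thesis using suff[OF assms _ st] n_def by simp
    qed
  qed
qed

end
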